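(* Fix $n\in\mathbb{N}$, points $x_1,\dots,x_n$, $\varepsilon_n>0$, a continuous function $V:\mathbb{R}\to[0,\infty)$ and weights $W_{ij}\geq0$ ($i,j=1,\dots,n$). For $p\geq1$ and $u:\{x_1,\dots,x_n\}\to\mathbb{R}$ define \[ \tilde{\mathcal{G}}_n^{(p)}(u)=\Big[\frac{1}{\varepsilon_nn^2}\sum_{i,j=1}^nW_{ij}^p|u(x_i)-u(x_j)|^p+\frac{1}{\varepsilon_n^pn}\sum_{i=1}^nV^p(u(x_i))\Big]^{1/p}, \] \[ \mathcal{G}_n^{(\infty)}(u)=\max\Big\{\max_{i,j}W_{ij}|u(x_i)-u(x_j)|,\ \frac{1}{\varepsilon_n}\max_iV(u(x_i))\Big\}. \] Then $\tilde{\mathcal{G}}_n^{(p)}$ $\Gamma$-converges to $\mathcal{G}_n^{(\infty)}$ as $p\to\infty$, with respect to pointwise convergence of functions on $\{x_1,\dots,x_n\}$ (i.e. convergence in $\mathbb{R}^n$).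
   Context: $\Gamma$-convergence as $p\to\infty$: for every $u$ and every family $u_p\to u$, $\mathcal{G}_n^{(\infty)}(u)\leq\liminf_{p\to\infty}\tilde{\mathcal{G}}_n^{(p)}(u_p)$, and for every $u$ there exists $u_p\to u$ with $\limsup_{p\to\infty}\tilde{\mathcal{G}}_n^{(p)}(u_p)\leq\mathcal{G}_n^{(\infty)}(u)$. *)

theory Defs
  imports "HOL-Analysis.Analysis"
begin

text \<open>The points x_1..x_n are represented by the finite index type 'n (n = CARD('n));
  a function u on the points is a vector u :: 'n \<Rightarrow> real.\<close>

definition Gp :: "real \<Rightarrow> ('n::finite \<Rightarrow> 'n \<Rightarrow> real) \<Rightarrow> (real \<Rightarrow> real) \<Rightarrow> real \<Rightarrow> ('n \<Rightarrow> real) \<Rightarrow> real" where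
  "Gp eps W V p u =
     ((1 / (eps * real CARD('n) ^ 2)) * (\<Sum>i\<in>UNIV. \<Sum>j\<in>UNIV. W i j powr p * \<bar>u i - u j\<bar> powr p)
      + (1 / (eps powr p * real CARD('n))) * (\<Sum>i\<in>UNIV. V (u i) powr p)) powr (1 / p)"

definition Ginf :: "real \<Rightarrow> ('n::finite \<Rightarrow> 'n \<Rightarrow> real) \<Rightarrow> (real \<Rightarrow> real) \<Rightarrow> ('n \<Rightarrow> real) \<Rightarrow> real" where
  "Ginf eps W V u =
     max (Max {W i j * \<bar>u i - u j\<bar> | i j. True}) ((1 / eps) * Max {V (u i) | i. True})"

end

theory Submission
  imports Defs
begin

lemma tendsto_Max_fin:
  fixes f :: "'a \<Rightarrow> 'b \<Rightarrow> real"
  assumes "finite A" "A \<noteq> {}" "\<And>k. k \<in> A \<Longrightarrow> (f k \<longlongrightarrow> l k) F"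
  shows "((\<lambda>x. Max ((\<lambda>k. f k x) ` A)) \<longlongrightarrow> Max (l ` A)) F"
  using assms
proof (induction A rule: finite_ne_induct)
  case (singleton x)
  then show ?case by simp
next
  case (insert x A)
  have "((\<lambda>y. max (f x y) (Max ((\<lambda>k. f k y) ` A))) \<longlongrightarrow> max (l x) (Max (l ` A))) F"
    using insert by (intro tendsto_max) auto
  then show ?case using insert by simp
qed

lemma key:
  fixes f :: "'a \<Rightarrow> real \<Rightarrow> real" and g :: "'b \<Rightarrow> real \<Rightarrow> real"
  assumes A: "finite A" "A \<noteq> {}" and B: "finite B" "B \<noteq> {}"
    and c: "c1 > 0" "c2 > 0"
    and fl: "\<And>k. k \<in> A \<Longrightarrow> (f k \<longlongrightarrow> a k) at_top"
    and gl: "\<And>k. k \<in> B \<Longrightarrow> (g k \<longlongrightarrow> b k) at_top"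
    and fn: "\<And>k p. f k p \<ge> 0" and gn: "\<And>k p. g k p \<ge> 0"
  shows "((\<lambda>p. (c1 * (\<Sum>k\<in>A. f k p powr p) + c2 * (\<Sum>k\<in>B. g k p powr p)) powr (1/p))
          \<longlongrightarrow> max (Max (a ` A)) (Max (b ` B))) at_top"
proof -
  define M where "M p = max (Max ((\<lambda>k. f k p) ` A)) (Max ((\<lambda>k. g k p) ` B))" for p
  define S where "S p = c1 * (\<Sum>k\<in>A. f k p powr p) + c2 * (\<Sum>k\<in>B. g k p powr p)" for p
  define C where "C = c1 * card A + c2 * card B"
  define cm where "cm = min c1 c2"
  have Ml: "(M \<longlongrightarrow> max (Max (a ` A)) (Max (b ` B))) at_top"
    unfolding M_def using A B fl gl by (intro tendsto_max tendsto_Max_fin) auto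
  have M0: "M p \<ge> 0" for p
  proof -
    obtain k where "k \<in> A" using A by auto
    then have "f k p \<le> Max ((\<lambda>k. f k p) ` A)" using A by (intro Max_ge) auto
    then show ?thesis using fn[of k p] unfolding M_def by linarith
  qed
  have Cpos: "C > 0" unfolding C_def using A B c
    by (simp add: add_pos_pos card_gt_0_iff)
  have cmpos: "cm > 0" unfolding cm_def using c by simp
  have up: "S p \<le> C * M p powr p" if p: "p > 0" for p
  proof -
    have fa: "f k p powr p \<le> M p powr p" if "k \<in> A" for k
    proof -
      have "f k p \<le> Max ((\<lambda>k. f k p) ` A)" using A that by (intro Max_ge) auto
      then have "f k p \<le> M p" unfolding M_def by linarith
      then show ?thesis using p fn by (intro powr_mono2) auto
    qed
    have gb: "g k p powr p \<le> M p powr p" if "k \<in> B" for k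
    proof -
      have "g k p \<le> Max ((\<lambda>k. g k p) ` B)" using B that by (intro Max_ge) auto
      then have "g k p \<le> M p" unfolding M_def by linarith
      then show ?thesis using p gn by (intro powr_mono2) auto
    qed
    have "(\<Sum>k\<in>A. f k p powr p) \<le> card A * M p powr p"
      using sum_bounded_above[of A "\<lambda>k. f k p powr p" "M p powr p"] fa by auto
    moreover have "(\<Sum>k\<in>B. g k p powr p) \<le> card B * M p powr p"
      using sum_bounded_above[of B "\<lambda>k. g k p powr p" "M p powr p"] gb by auto
    ultimately have "S p \<le> c1 * (card A * M p powr p) + c2 * (card B * M p powr p)"
      unfolding S_def using c by (intro add_mono mult_left_mono) auto
    then show ?thesis unfolding C_def by (simp add: algebra_simps)
  qed
  have lo: "cm * M p powr p \<le> S p" if p: "p > 0" for p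
  proof -
    have s1: "(\<Sum>k\<in>A. f k p powr p) \<ge> 0" by (intro sum_nonneg) auto
    have s2: "(\<Sum>k\<in>B. g k p powr p) \<ge> 0" by (intro sum_nonneg) auto
    show ?thesis
    proof (cases "Max ((\<lambda>k. g k p) ` B) \<le> Max ((\<lambda>k. f k p) ` A)")
      case True
      obtain k where k: "k \<in> A" "f k p = Max ((\<lambda>k. f k p) ` A)"
        using Max_in[of "(\<lambda>k. f k p) ` A"] A by (metis (no_types, lifting) finite_imageI image_is_empty imageE)
      have "M p = f k p" using True k unfolding M_def by simp
      moreover have "f k p powr p \<le> (\<Sum>k\<in>A. f k p powr p)"
        using A k by (intro member_le_sum) auto
      ultimately have "cm * M p powr p \<le> c1 * (\<Sum>k\<in>A. f k p powr p)"
        unfolding cm_def using c by (intro mult_mono) auto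
      then show ?thesis unfolding S_def using s2 c by (smt (verit) mult_nonneg_nonneg)
    next
      case False
      obtain k where k: "k \<in> B" "g k p = Max ((\<lambda>k. g k p) ` B)"
        using Max_in[of "(\<lambda>k. g k p) ` B"] B by (metis (no_types, lifting) finite_imageI image_is_empty imageE)
      have "M p = g k p" using False k unfolding M_def by simp
      moreover have "g k p powr p \<le> (\<Sum>k\<in>B. g k p powr p)"
        using B k by (intro member_le_sum) auto
      ultimately have "cm * M p powr p \<le> c2 * (\<Sum>k\<in>B. g k p powr p)"
        unfolding cm_def using c by (intro mult_mono) auto
      then show ?thesis unfolding S_def using s1 c by (smt (verit) mult_nonneg_nonneg)
    qed
  qed
  have eq: "(K * M p powr p) powr (1/p) = K powr (1/p) * M p" if "p > 0" "K > 0" for p K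
    using that M0[of p] by (simp add: powr_mult powr_powr)
  have ev1: "\<forall>\<^sub>F p in at_top. cm powr (1/p) * M p \<le> S p powr (1/p)"
    using eventually_gt_at_top[of "0::real"]
  proof eventually_elim
    case (elim p)
    have "(cm * M p powr p) powr (1/p) \<le> S p powr (1/p)"
      using lo[OF elim] elim cmpos M0 by (intro powr_mono2) auto
    then show ?case using eq[OF elim cmpos] by simp
  qed
  have ev2: "\<forall>\<^sub>F p in at_top. S p powr (1/p) \<le> C powr (1/p) * M p"
    using eventually_gt_at_top[of "0::real"]
  proof eventually_elim
    case (elim p)
    have "S p \<ge> 0" unfolding S_def using c
      by (intro add_nonneg_nonneg mult_nonneg_nonneg sum_nonneg) auto
    then have "S p powr (1/p) \<le> (C * M p powr p) powr (1/p)"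
      using up[OF elim] elim by (intro powr_mono2) auto
    then show ?case using eq[OF elim Cpos] by simp
  qed
  have inv: "((\<lambda>p::real. 1/p) \<longlongrightarrow> 0) at_top"
    using tendsto_inverse_0_at_top[OF filterlim_ident] by (simp add: inverse_eq_divide)
  have pw: "((\<lambda>p. K powr (1/p)) \<longlongrightarrow> 1) at_top" if "K > 0" for K :: real
    using tendsto_powr[OF tendsto_const inv, of K] that by simp
  have l1: "((\<lambda>p. cm powr (1/p) * M p) \<longlongrightarrow> max (Max (a ` A)) (Max (b ` B))) at_top"
    using tendsto_mult[OF pw[OF cmpos] Ml] by simp
  have l2: "((\<lambda>p. C powr (1/p) * M p) \<longlongrightarrow> max (Max (a ` A)) (Max (b ` B))) at_top"
    using tendsto_mult[OF pw[OF Cpos] Ml] by simp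
  show ?thesis using tendsto_sandwich[OF ev1 ev2 l1 l2] unfolding S_def .
qed

theorem proposition1p4:
  fixes eps :: real and W :: "'n::finite \<Rightarrow> 'n \<Rightarrow> real" and V :: "real \<Rightarrow> real"
  assumes "eps > 0"
    and "continuous_on UNIV V"
    and "\<And>x. V x \<ge> 0"
    and "\<And>i j. W i j \<ge> 0"
  shows "(\<forall>(u :: 'n \<Rightarrow> real) (up :: real \<Rightarrow> 'n \<Rightarrow> real).
            (\<forall>i. ((\<lambda>p. up p i) \<longlongrightarrow> u i) at_top) \<longrightarrow>
            ereal (Ginf eps W V u) \<le> Liminf at_top (\<lambda>p. ereal (Gp eps W V p (up p))))
       \<and> (\<forall>u :: 'n \<Rightarrow> real. \<exists>up :: real \<Rightarrow> 'n \<Rightarrow> real.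
            (\<forall>i. ((\<lambda>p. up p i) \<longlongrightarrow> u i) at_top) \<and>
            Limsup at_top (\<lambda>p. ereal (Gp eps W V p (up p))) \<le> ereal (Ginf eps W V u))"
proof -
  have conv: "((\<lambda>p. Gp eps W V p (up p)) \<longlongrightarrow> Ginf eps W V u) at_top"
    if lim: "\<forall>i. ((\<lambda>p. up p i) \<longlongrightarrow> u i) at_top" for u :: "'n \<Rightarrow> real" and up
  proof -
    define f where "f = (\<lambda>(ij::'n\<times>'n) p. W (fst ij) (snd ij) * \<bar>up p (fst ij) - up p (snd ij)\<bar>)"
    define a where "a = (\<lambda>(ij::'n\<times>'n). W (fst ij) (snd ij) * \<bar>u (fst ij) - u (snd ij)\<bar>)"
    define g where "g = (\<lambda>i p. V (up p i) / eps)"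
    define b where "b = (\<lambda>i. V (u i) / eps)"
    have isc: "isCont V x" for x using assms(2) by (simp add: continuous_on_eq_continuous_at)
    have fl: "(f k \<longlongrightarrow> a k) at_top" for k
      unfolding f_def a_def using lim by (auto intro!: tendsto_intros)
    have gl: "(g k \<longlongrightarrow> b k) at_top" for k
      unfolding g_def b_def using lim isc assms(1) by (auto intro!: tendsto_intros isCont_tendsto_compose[of _ V])
    have fn: "f k p \<ge> 0" for k p unfolding f_def using assms(4) by (simp add: case_prod_beta)
    have gn: "g k p \<ge> 0" for k p unfolding g_def using assms(1,3) by simp
    have c1: "1 / (eps * real CARD('n) ^ 2) > 0" using assms(1) by simp
    have c2: "1 / real CARD('n) > 0" by simp
    have K: "((\<lambda>p. (1 / (eps * real CARD('n) ^ 2) * (\<Sum>k\<in>UNIV. f k p powr p)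
        + 1 / real CARD('n) * (\<Sum>k\<in>UNIV. g k p powr p)) powr (1/p))
          \<longlongrightarrow> max (Max (a ` UNIV)) (Max (b ` UNIV))) at_top"
      by (rule key[OF _ _ _ _ c1 c2 fl gl fn gn]) auto
    have eqG: "Gp eps W V p (up p) = (1 / (eps * real CARD('n) ^ 2) * (\<Sum>k\<in>UNIV. f k p powr p)
        + 1 / real CARD('n) * (\<Sum>k\<in>UNIV. g k p powr p)) powr (1/p)" for p
    proof -
      have s1: "(\<Sum>i\<in>UNIV. \<Sum>j\<in>UNIV. W i j powr p * \<bar>up p i - up p j\<bar> powr p)
          = (\<Sum>k\<in>UNIV. f k p powr p)"
        unfolding f_def using assms(4)
        by (simp add: sum.cartesian_product powr_mult case_prod_beta UNIV_Times_UNIV[symmetric] del: UNIV_Times_UNIV)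
      have s2: "(1 / (eps powr p * real CARD('n))) * (\<Sum>i\<in>UNIV. V (up p i) powr p)
          = 1 / real CARD('n) * (\<Sum>k\<in>UNIV. g k p powr p)"
        unfolding g_def using assms(1,3)
        by (simp add: powr_divide sum_divide_distrib[symmetric])
      show ?thesis unfolding Gp_def s1 s2 ..
    qed
    have e1: "{W i j * \<bar>u i - u j\<bar> | i j. True} = a ` UNIV"
      unfolding a_def
    proof (rule set_eqI)
      fix x
      show "x \<in> {W i j * \<bar>u i - u j\<bar> | i j. True} \<longleftrightarrow> x \<in> range (\<lambda>ij. W (fst ij) (snd ij) * \<bar>u (fst ij) - u (snd ij)\<bar>)"
        by (auto simp: image_iff)
    qed
    have mono: "mono (\<lambda>x. x / eps)" using assms(1) by (intro monoI) (simp add: divide_right_mono)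
    have e2: "(1 / eps) * Max {V (u i) | i. True} = Max (b ` UNIV)"
    proof -
      have "{V (u i) | i. True} = (\<lambda>i. V (u i)) ` UNIV" by auto
      then have "(1 / eps) * Max {V (u i) | i. True} = Max ((\<lambda>x. x / eps) ` ((\<lambda>i. V (u i)) ` UNIV))"
        using mono_Max_commute[OF mono, of "(\<lambda>i. V (u i)) ` UNIV"] by simp
      then show ?thesis unfolding b_def by (simp add: image_image)
    qed
    have "Ginf eps W V u = max (Max (a ` UNIV)) (Max (b ` UNIV))"
      unfolding Ginf_def e1 e2 ..
    then show ?thesis using K unfolding eqG by simp
  qed
  show ?thesis
  proof (intro conjI allI impI)
    fix u :: "'n \<Rightarrow> real" and up :: "real \<Rightarrow> 'n \<Rightarrow> real"
    assume "\<forall>i. ((\<lambda>p. up p i) \<longlongrightarrow> u i) at_top"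
    then have "((\<lambda>p. ereal (Gp eps W V p (up p))) \<longlongrightarrow> ereal (Ginf eps W V u)) at_top"
      using conv by (intro tendsto_ereal) auto
    then show "ereal (Ginf eps W V u) \<le> Liminf at_top (\<lambda>p. ereal (Gp eps W V p (up p)))"
      using lim_imp_Liminf[OF trivial_limit_at_top_linorder] by (metis order_refl)
  next
    fix u :: "'n \<Rightarrow> real"
    have l: "\<forall>i. ((\<lambda>p. (\<lambda>p. u) p i) \<longlongrightarrow> u i) at_top" by simp
    then have "((\<lambda>p. ereal (Gp eps W V p u)) \<longlongrightarrow> ereal (Ginf eps W V u)) at_top"
      using conv[OF l] by (intro tendsto_ereal) auto
    then have "Limsup at_top (\<lambda>p. ereal (Gp eps W V p u)) = ereal (Ginf eps W V u)"
      using lim_imp_Limsup[OF trivial_limit_at_top_linorder] by metis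
    then show "\<exists>up :: real \<Rightarrow> 'n \<Rightarrow> real. (\<forall>i. ((\<lambda>p. up p i) \<longlongrightarrow> u i) at_top) \<and>
            Limsup at_top (\<lambda>p. ereal (Gp eps W V p (up p))) \<le> ereal (Ginf eps W V u)"
      by (intro exI[of _ "\<lambda>p. u"]) simp
  qed
qed

end
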